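(* Let $f:A\to B$ be a homomorphism of commutative rings such that every ideal of $B$ is of the form $f(\mathfrak{a})B$ for some ideal $\mathfrak{a}\subseteq A$, and let $\sigma$ be a hereditary torsion theory on $A$-modules such that $A$ is totally $\sigma$-artinian. Then $B$ is totally $f(\sigma)$-artinian.
   Context: $\mathcal{L}(\sigma)$ is the Gabriel filter of $\sigma$. $f(\sigma)$ is the hereditary torsion theory on $B$-modules with Gabriel filter $\mathcal{L}(f(\sigma))=\{\mathfrak{b}\subseteq B: f^{-1}(\mathfrak{b})\in\mathcal{L}(\sigma)\}$ (a $B$-module is $f(\sigma)$-torsion iff it is $\sigma$-torsion as an $A$-module). A ring $R$ with hereditary torsion theory $\tau$ is totally $\tau$-artinian if for every descending chain of ideals $\mathfrak{a}_1\supseteq\mathfrak{a}_2\supseteq\cdots$ there exist $m$ and $\mathfrak{h}\in\mathcal{L}(\tau)$ with $\mathfrak{a}_m\mathfrak{h}\subseteq\mathfrak{a}_s$ for all $s\ge m$. *)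

theory Defs
  imports Main
begin

definition is_ideal :: "'a::comm_ring_1 set \<Rightarrow> bool" where
  "is_ideal I \<longleftrightarrow> 0 \<in> I \<and> (\<forall>x\<in>I. \<forall>y\<in>I. x + y \<in> I) \<and> (\<forall>r. \<forall>x\<in>I. r * x \<in> I)"

definition gen_ideal :: "'a::comm_ring_1 set \<Rightarrow> 'a set" where
  "gen_ideal S = \<Inter>{K. is_ideal K \<and> S \<subseteq> K}"

definition ideal_prod :: "'a::comm_ring_1 set \<Rightarrow> 'a set \<Rightarrow> 'a set" where
  "ideal_prod I J = gen_ideal {x * y | x y. x \<in> I \<and> y \<in> J}"

definition colon :: "'a::comm_ring_1 set \<Rightarrow> 'a \<Rightarrow> 'a set" where
  "colon I r = {x. x * r \<in> I}"

definition ring_hom_cr :: "('a::comm_ring_1 \<Rightarrow> 'b::comm_ring_1) \<Rightarrow> bool" where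
  "ring_hom_cr f \<longleftrightarrow> f 1 = 1 \<and> (\<forall>x y. f (x + y) = f x + f y) \<and> (\<forall>x y. f (x * y) = f x * f y)"

definition ext_ideal :: "('a::comm_ring_1 \<Rightarrow> 'b::comm_ring_1) \<Rightarrow> 'a set \<Rightarrow> 'b set" where
  "ext_ideal f I = gen_ideal (f ` I)"

text \<open>Gabriel filter (Gabriel topology) of a hereditary torsion theory, axioms T1--T4 (Stenstroem).\<close>
definition gabriel_filter :: "'a::comm_ring_1 set set \<Rightarrow> bool" where
  "gabriel_filter L \<longleftrightarrow>
     (\<forall>I\<in>L. is_ideal I) \<and> UNIV \<in> L \<and>
     (\<forall>I\<in>L. \<forall>J. is_ideal J \<and> I \<subseteq> J \<longrightarrow> J \<in> L) \<and>
     (\<forall>I\<in>L. \<forall>J\<in>L. I \<inter> J \<in> L) \<and>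
     (\<forall>I\<in>L. \<forall>r. colon I r \<in> L) \<and>
     (\<forall>J. is_ideal J \<and> (\<exists>I\<in>L. \<forall>r\<in>I. colon J r \<in> L) \<longrightarrow> J \<in> L)"

text \<open>Gabriel filter of f(sigma): ideals b of B with f^-1(b) in L(sigma).\<close>
definition push_filter :: "('a::comm_ring_1 \<Rightarrow> 'b::comm_ring_1) \<Rightarrow> 'a set set \<Rightarrow> 'b set set" where
  "push_filter f L = {J. is_ideal J \<and> f -` J \<in> L}"

text \<open>Totally tau-artinian, tau given by its Gabriel filter L.\<close>
definition totally_artinian :: "'a::comm_ring_1 set set \<Rightarrow> bool" where
  "totally_artinian L \<longleftrightarrow>
     (\<forall>a :: nat \<Rightarrow> 'a set. (\<forall>n. is_ideal (a n)) \<and> (\<forall>n. a (Suc n) \<subseteq> a n) \<longrightarrow>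
        (\<exists>m. \<exists>h\<in>L. \<forall>s\<ge>m. ideal_prod (a m) h \<subseteq> a s))"

end

theory Submission
  imports Defs
begin

lemma gen_ideal_is: "is_ideal (gen_ideal S)"
  unfolding gen_ideal_def is_ideal_def by auto

lemma gen_ideal_sub: "S \<subseteq> gen_ideal S"
  unfolding gen_ideal_def by auto

lemma gen_ideal_least: "is_ideal K \<Longrightarrow> S \<subseteq> K \<Longrightarrow> gen_ideal S \<subseteq> K"
  unfolding gen_ideal_def by auto

lemma hom0: "ring_hom_cr f \<Longrightarrow> f 0 = 0"
  unfolding ring_hom_cr_def by (metis add_0 add_cancel_right_right)

lemma preimage_ideal: "ring_hom_cr f \<Longrightarrow> is_ideal J \<Longrightarrow> is_ideal (f -` J)"
  unfolding is_ideal_def using hom0[of f] unfolding ring_hom_cr_def by auto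

lemma ext_preimage:
  assumes "ring_hom_cr f" "is_ideal J" "J = ext_ideal f I"
  shows "ext_ideal f (f -` J) = J"
proof
  show "ext_ideal f (f -` J) \<subseteq> J" unfolding ext_ideal_def
    using gen_ideal_least[OF assms(2)] by auto
  have "f ` I \<subseteq> J" using assms(3) gen_ideal_sub[of "f ` I"] unfolding ext_ideal_def by simp
  then have "I \<subseteq> f -` J" by (simp add: image_subset_iff_subset_vimage)
  then show "J \<subseteq> ext_ideal f (f -` J)" unfolding assms(3) ext_ideal_def
    by (intro gen_ideal_least[OF gen_ideal_is]) (meson gen_ideal_sub image_mono order_trans)
qed

lemma mult_ideal: "is_ideal K \<Longrightarrow> is_ideal {x. x * y \<in> K}"
  unfolding is_ideal_def by (auto simp: distrib_right mult.assoc)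

lemma mult_ideal2: "is_ideal K \<Longrightarrow> is_ideal {y. x * y \<in> K}"
  unfolding is_ideal_def by (auto simp: distrib_left mult.left_commute)

lemma prod_ext:
  assumes hom: "ring_hom_cr f" and K: "is_ideal K"
    and P: "\<And>a c. a \<in> A \<Longrightarrow> c \<in> C \<Longrightarrow> f (a * c) \<in> K"
  shows "ideal_prod (ext_ideal f A) (ext_ideal f C) \<subseteq> K"
proof -
  have 1: "x * y \<in> K" if x: "x \<in> ext_ideal f A" and y: "y \<in> f ` C" for x y
  proof -
    have "f ` A \<subseteq> {x. x * y \<in> K}" using y P hom unfolding ring_hom_cr_def by auto
    then show ?thesis using gen_ideal_least[OF mult_ideal[OF K]] x unfolding ext_ideal_def by blast
  qed
  have 2: "x * y \<in> K" if x: "x \<in> ext_ideal f A" and y: "y \<in> ext_ideal f C" for x y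
  proof -
    have "f ` C \<subseteq> {y. x * y \<in> K}" using 1 x by auto
    then show ?thesis using gen_ideal_least[OF mult_ideal2[OF K]] y unfolding ext_ideal_def by blast
  qed
  show ?thesis unfolding ideal_prod_def using 2 by (intro gen_ideal_least[OF K]) auto
qed

theorem mainTheorem9:
  fixes f :: "'a::comm_ring_1 \<Rightarrow> 'b::comm_ring_1"
    and L :: "'a set set"
  assumes "ring_hom_cr f"
    and "\<forall>J :: 'b set. is_ideal J \<longrightarrow> (\<exists>I. is_ideal I \<and> J = ext_ideal f I)"
    and "gabriel_filter L"
    and "totally_artinian L"
  shows "totally_artinian (push_filter f L)"
  unfolding totally_artinian_def
proof (intro allI impI)
  fix b :: "nat \<Rightarrow> 'b set"
  assume bb: "(\<forall>n. is_ideal (b n)) \<and> (\<forall>n. b (Suc n) \<subseteq> b n)"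
  define a where "a n = f -` b n" for n
  have ai: "\<forall>n. is_ideal (a n)" using bb preimage_ideal[OF assms(1)] a_def by auto
  have ad: "\<forall>n. a (Suc n) \<subseteq> a n" unfolding a_def using bb by (simp add: vimage_mono)
  have be: "ext_ideal f (a n) = b n" for n
  proof -
    obtain I where "b n = ext_ideal f I" using assms(2) bb by blast
    moreover have "is_ideal (b n)" using bb by blast
    ultimately show ?thesis unfolding a_def by (rule ext_preimage[OF assms(1), rotated])
  qed
  obtain m h where h: "h \<in> L" and mh: "\<forall>s\<ge>m. ideal_prod (a m) h \<subseteq> a s"
  proof -
    have "(\<forall>n. is_ideal (a n)) \<and> (\<forall>n. a (Suc n) \<subseteq> a n)" using ai ad by (rule conjI)
    with assms(4) have "\<exists>m. \<exists>h\<in>L. \<forall>s\<ge>m. ideal_prod (a m) h \<subseteq> a s"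
      unfolding totally_artinian_def by (rule mp[OF spec[where x=a]])
    then show ?thesis using that by blast
  qed
  have "f ` h \<subseteq> ext_ideal f h" using gen_ideal_sub[of "f ` h"] unfolding ext_ideal_def .
  then have "h \<subseteq> f -` ext_ideal f h" by (simp add: image_subset_iff_subset_vimage)
  moreover have "is_ideal (f -` ext_ideal f h)"
    unfolding ext_ideal_def by (rule preimage_ideal[OF assms(1) gen_ideal_is])
  ultimately have "f -` ext_ideal f h \<in> L" using assms(3) h unfolding gabriel_filter_def
    by (elim conjE) (drule bspec[OF _ h], blast)
  then have hp: "ext_ideal f h \<in> push_filter f L"
    unfolding push_filter_def ext_ideal_def using gen_ideal_is by simp
  have "\<forall>s\<ge>m. ideal_prod (b m) (ext_ideal f h) \<subseteq> b s"
  proof (intro allI impI)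
    fix s assume "m \<le> s"
    then have "ideal_prod (a m) h \<subseteq> a s" using mh by auto
    then have "\<And>x c. x \<in> a m \<Longrightarrow> c \<in> h \<Longrightarrow> f (x * c) \<in> b s"
    proof -
      fix x c assume "x \<in> a m" "c \<in> h"
      then have "x * c \<in> {x * y | x y. x \<in> a m \<and> y \<in> h}" by blast
      then have "x * c \<in> ideal_prod (a m) h" unfolding ideal_prod_def by (rule subsetD[OF gen_ideal_sub])
      then have "x * c \<in> a s" using \<open>ideal_prod (a m) h \<subseteq> a s\<close> by (rule rev_subsetD)
      then show "f (x * c) \<in> b s" unfolding a_def by simp
    qed
    then show "ideal_prod (b m) (ext_ideal f h) \<subseteq> b s"
    proof -
      assume P: "\<And>x c. x \<in> a m \<Longrightarrow> c \<in> h \<Longrightarrow> f (x * c) \<in> b s"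
      have K: "is_ideal (b s)" using bb by blast
      have "ideal_prod (ext_ideal f (a m)) (ext_ideal f h) \<subseteq> b s"
        by (rule prod_ext[OF assms(1) K P])
      then show ?thesis by (simp only: be)
    qed
  qed
  then show "\<exists>m. \<exists>h\<in>push_filter f L. \<forall>s\<ge>m. ideal_prod (b m) h \<subseteq> b s"
    using hp by blast
qed

end
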